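(* Let $\lambda\in\mathbb{R}$ and $f(x)=\lfloor \lambda x\rfloor$ for $x\in\mathbb{R}$. Let $\mathrm{Fix}(f)=\{x\in\mathbb{R}: f(x)=x\}$. Then: 1) If $\lambda\le 0$, then $\mathrm{Fix}(f)=\{0\}$. 2) If $\frac{m-1}{m}<\lambda\le\frac{m}{m+1}$ for some $m\in\mathbb{N}=\{1,2,\dots\}$, then $\mathrm{Fix}(f)=\{0,-1,-2,\dots,-m\}$. 3) If $\lambda=1$, then $\mathrm{Fix}(f)=\mathbb{Z}$. 4) If $\frac{m+1}{m}\le\lambda<\frac{m}{m-1}$ for some $m\in\mathbb{N}$ (for $m=1$ this condition is read as $2\le\lambda<+\infty$), then $\mathrm{Fix}(f)=\{0,1,2,\dots,m-1\}$.
   Context: $\lfloor x\rfloor=\max\{m\in\mathbb{Z}: m\le x\}$ denotes the floor function. Note that the intervals $\left(\frac{m-1}{m},\frac{m}{m+1}\right]$, $m\in\mathbb{N}$, partition $(0,1)$, and the intervals $\left[\frac{m+1}{m},\frac{m}{m-1}\right)$, $m\in\mathbb{N}$ (with the $m=1$ interval being $[2,+\infty)$), partition $(1,+\infty)$. *)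

theory Defs
  imports Complex_Main
begin

definition Fix :: "(real \<Rightarrow> real) \<Rightarrow> real set" where
  "Fix f = {x. f x = x}"

end

theory Submission
  imports Defs
begin

lemma fix_char:
  "x \<in> Fix (\<lambda>x::real. real_of_int \<lfloor>l * x\<rfloor>) \<longleftrightarrow>
   (\<exists>n::int. x = of_int n \<and> of_int n \<le> l * of_int n \<and> l * of_int n < of_int n + 1)"
  unfolding Fix_def
  by (auto simp: floor_eq_iff) (metis floor_eq_iff of_int_floor_cancel)

lemma c1:
  fixes l :: real and n :: int
  assumes "l \<le> 0"
  shows "(of_int n \<le> l * of_int n \<and> l * of_int n < of_int n + 1) \<longleftrightarrow> n = 0"
proof
  assume h: "of_int n \<le> l * of_int n \<and> l * of_int n < of_int n + 1"
  show "n = 0"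
  proof (rule ccontr)
    assume "n \<noteq> 0"
    then consider "n \<ge> 1" | "n \<le> -1" by linarith
    then show False
    proof cases
      case 1 then have "l * of_int n \<le> 0" using assms by (simp add: mult_nonpos_nonneg)
      then show False using h 1 by linarith
    next
      case 2
      have "l * of_int n \<ge> 0" using assms 2 by (simp add: mult_nonpos_nonpos)
      then show False using h 2 by linarith
    qed
  qed
qed auto

lemma c2:
  fixes l :: real and n :: int and m :: nat
  assumes "m \<ge> 1" "real m - 1 < l * real m" "l * (real m + 1) \<le> real m"
  shows "(of_int n \<le> l * of_int n \<and> l * of_int n < of_int n + 1) \<longleftrightarrow> (n \<le> 0 \<and> n \<ge> - int m)"
proof -
  have l1: "l < 1"
  proof (rule ccontr)
    assume "\<not> l < 1"
    then have "1 * (real m + 1) \<le> l * (real m + 1)" by (intro mult_right_mono) auto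
    then show False using assms(3) by (simp only: mult_1)
  qed
  have lpos: "l > 0"
  proof (rule ccontr)
    assume "\<not> l > 0"
    then have "l * real m \<le> 0" by (simp add: mult_nonpos_nonneg)
    then show False using assms(1,2) by simp
  qed
  show ?thesis
  proof (cases "n > 0")
    case True
    have "l * of_int n < of_int n" using True l1 by simp
    then show ?thesis using True by auto
  next
    case False
    define k where "k = nat (-n)"
    have n: "of_int n = - real k" "n = - int k" using False by (auto simp: k_def)
    have "l * real k \<le> 1 * real k" using l1 by (intro mult_right_mono) auto
    then have a: "of_int n \<le> l * of_int n" using n by simp
    have "l * of_int n < of_int n + 1 \<longleftrightarrow> k \<le> m"
    proof
      assume h: "l * of_int n < of_int n + 1"
      show "k \<le> m"
      proof (rule ccontr)
        assume "\<not> k \<le> m"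
        then have "real k \<ge> real m + 1" by simp
        have A: "l * real k * (real m + 1) \<le> real m * real k"
        proof -
          have "l * (real m + 1) * real k \<le> real m * real k" using assms(3) by (intro mult_right_mono) auto
          then show ?thesis by (simp add: algebra_simps)
        qed
        have B: "l * real k > real k - 1" using h n by simp
        have "(real k - 1) * (real m + 1) < real m * real k"
        proof -
          have "(real k - 1) * (real m + 1) < l * real k * (real m + 1)"
            using \<open>l * real k > real k - 1\<close> by (intro mult_strict_right_mono) auto
          then show ?thesis using A by linarith
        qed
        then show False using \<open>real k \<ge> real m + 1\<close> by (simp add: algebra_simps)
      qed
    next
      assume h: "k \<le> m"
      have "real k \<le> real m" using h by simp
      have "(real k - 1) * real m \<le> (real m - 1) * real k" using \<open>real k \<le> real m\<close>
        by (simp add: algebra_simps)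
      also have "\<dots> \<le> l * real m * real k"
        using assms(2) by (simp add: mult_right_mono)
      finally have "(real k - 1) * real m \<le> l * real k * real m" by (simp add: algebra_simps)
      then have "real k - 1 \<le> l * real k" using assms(1) by simp
      have "real k - 1 < l * real k"
      proof (cases "k = 0")
        case True then show ?thesis by simp
      next
        case False
        have "(real k - 1) * real m < l * real m * real k"
        proof -
          have "(real k - 1) * real m \<le> (real m - 1) * real k" using \<open>real k \<le> real m\<close>
            by (simp add: algebra_simps)
          also have "\<dots> < l * real m * real k"
            using assms(2) False by (simp add: mult_strict_right_mono)
          finally show ?thesis .
        qed
        then have "(real k - 1) * real m < (l * real k) * real m" by (simp add: algebra_simps)
        then show ?thesis using assms(1) by (simp add: mult_less_cancel_right)
      qed
      then show "l * of_int n < of_int n + 1" using n by simp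
    qed
    then show ?thesis using a n False by auto
  qed
qed

lemma c4:
  fixes l :: real and n :: int and m :: nat
  assumes "m \<ge> 1" "real m + 1 \<le> l * real m" "m = 1 \<or> l * (real m - 1) < real m"
  shows "(of_int n \<le> l * of_int n \<and> l * of_int n < of_int n + 1) \<longleftrightarrow> (n \<ge> 0 \<and> n \<le> int m - 1)"
proof -
  have l1: "l > 1"
  proof (rule ccontr)
    assume "\<not> l > 1"
    then have "l * real m \<le> 1 * real m" by (intro mult_right_mono) auto
    then show False using assms(2) by simp
  qed
  show ?thesis
  proof (cases "n < 0")
    case True
    have "l * of_int n < of_int n" using True l1 by simp
    then show ?thesis using True by auto
  next
    case False
    define k where "k = nat n"
    have n: "of_int n = real k" "n = int k" using False by (auto simp: k_def)
    have "1 * real k \<le> l * real k" using l1 by (intro mult_right_mono) auto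
    then have a: "of_int n \<le> l * of_int n" using n by simp
    have "l * of_int n < of_int n + 1 \<longleftrightarrow> k \<le> m - 1"
    proof
      assume h: "l * of_int n < of_int n + 1"
      show "k \<le> m - 1"
      proof (rule ccontr)
        assume "\<not> k \<le> m - 1"
        then have "real k \<ge> real m" using assms(1) by simp
        have "(real m + 1) * real k \<le> l * real m * real k"
          using assms(2) by (simp add: mult_right_mono)
        moreover have "l * real k * real m < (real k + 1) * real m"
          using h n assms(1) by (simp add: mult_strict_right_mono)
        ultimately show False using \<open>real k \<ge> real m\<close> by (simp add: algebra_simps)
      qed
    next
      assume h: "k \<le> m - 1"
      show "l * of_int n < of_int n + 1"
      proof (cases "k = 0")
        case True then show ?thesis using n by simp
      next
        case False
        then have m2: "m \<noteq> 1" and km: "real k \<le> real m - 1" using h assms(1) by auto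
        have "l * real k * (real m - 1) \<le> l * (real m - 1) * real k" by (simp add: algebra_simps)
        also have "\<dots> < real m * real k" using assms(3) m2 False by (simp add: mult_strict_right_mono)
        also have "\<dots> \<le> (real k + 1) * (real m - 1)" using km by (simp add: algebra_simps)
        finally have "l * real k * (real m - 1) < (real k + 1) * (real m - 1)" .
        moreover have "real m - 1 > 0" using m2 assms(1) by simp
        ultimately have "l * real k < real k + 1" by (simp add: mult_less_cancel_right)
        then show ?thesis using n by simp
      qed
    qed
    then show ?thesis using a n False assms(1) by auto
  qed
qed

theorem lemma1:
  fixes l :: real
  defines "f \<equiv> (\<lambda>x::real. real_of_int \<lfloor>l * x\<rfloor>)"
  shows "(l \<le> 0 \<longrightarrow> Fix f = {0})
    \<and> (\<forall>m::nat. m \<ge> 1 \<longrightarrow> (real m - 1) / real m < l \<and> l \<le> real m / (real m + 1)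
          \<longrightarrow> Fix f = {x. \<exists>k::nat. k \<le> m \<and> x = - real k})
    \<and> (l = 1 \<longrightarrow> Fix f = \<int>)
    \<and> (\<forall>m::nat. m \<ge> 1 \<longrightarrow> (real m + 1) / real m \<le> l
          \<and> (m = 1 \<or> l < real m / (real m - 1))
          \<longrightarrow> Fix f = {x. \<exists>k::nat. k \<le> m - 1 \<and> x = real k})"
proof (intro conjI allI impI)
  assume "l \<le> 0"
  show "Fix f = {0}"
    unfolding f_def set_eq_iff fix_char c1[OF \<open>l \<le> 0\<close>] by auto
next
  fix m :: nat
  assume m: "m \<ge> 1" and h: "(real m - 1) / real m < l \<and> l \<le> real m / (real m + 1)"
  have h1: "real m - 1 < l * real m" using h m by (simp add: divide_less_eq)
  have h2: "l * (real m + 1) \<le> real m" using h by (simp add: le_divide_eq)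
  show "Fix f = {x. \<exists>k::nat. k \<le> m \<and> x = - real k}"
    unfolding f_def set_eq_iff fix_char c2[OF m h1 h2]
  proof (intro allI iffI)
    fix x :: real assume "\<exists>n::int. x = of_int n \<and> n \<le> 0 \<and> - int m \<le> n"
    then obtain n :: int where "x = of_int n" "n \<le> 0" "- int m \<le> n" by blast
    then show "x \<in> {x. \<exists>k::nat. k \<le> m \<and> x = - real k}"
      by (intro CollectI exI[of _ "nat (-n)"]) auto
  next
    fix x :: real assume "x \<in> {x. \<exists>k::nat. k \<le> m \<and> x = - real k}"
    then obtain k where "k \<le> m" "x = - real k" by auto
    then show "\<exists>n::int. x = of_int n \<and> n \<le> 0 \<and> - int m \<le> n"
      by (intro exI[of _ "- int k"]) auto
  qed
next
  assume "l = 1"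
  show "Fix f = \<int>"
    unfolding f_def set_eq_iff fix_char \<open>l = 1\<close> by (auto elim: Ints_cases)
next
  fix m :: nat
  assume m: "m \<ge> 1" and h: "(real m + 1) / real m \<le> l \<and> (m = 1 \<or> l < real m / (real m - 1))"
  have h1: "real m + 1 \<le> l * real m" using h m by (simp add: divide_le_eq)
  have h2: "m = 1 \<or> l * (real m - 1) < real m"
  proof (cases "m = 1")
    case False
    then have "real m - 1 > 0" using m by simp
    then show ?thesis using h False by (simp add: less_divide_eq)
  qed simp
  show "Fix f = {x. \<exists>k::nat. k \<le> m - 1 \<and> x = real k}"
    unfolding f_def set_eq_iff fix_char c4[OF m h1 h2]
  proof (intro allI iffI)
    fix x :: real assume "\<exists>n::int. x = of_int n \<and> 0 \<le> n \<and> n \<le> int m - 1"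
    then obtain n :: int where "x = of_int n" "0 \<le> n" "n \<le> int m - 1" by blast
    then show "x \<in> {x. \<exists>k::nat. k \<le> m - 1 \<and> x = real k}"
      by (intro CollectI exI[of _ "nat n"]) auto
  next
    fix x :: real assume "x \<in> {x. \<exists>k::nat. k \<le> m - 1 \<and> x = real k}"
    then obtain k where "k \<le> m - 1" "x = real k" by auto
    then show "\<exists>n::int. x = of_int n \<and> 0 \<le> n \<and> n \<le> int m - 1"
      using m by (intro exI[of _ "int k"]) auto
  qed
qed

end
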